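(* Let $G$ be an $(n,n,p_s,p_d)$-two-island network with groups $V_1,V_2$, and let the dual opinions evolve according to the dynamics in the context with common bias $b>0$, common resilience $\phi\in(0,1)$, and the symmetric initial condition $x_i(0)=x_0\in(\tfrac12,1)$, $y_i(0)=y_0\in[\tfrac12,x_0]$ for $i\in V_1$, $x_j(0)=1-x_0$, $y_j(0)=1-y_0$ for $j\in V_2$. Let $i\in V_1$. If there exists $k_x$ such that $x_i(t)$ is monotonic for all $t>k_x$, then there exists $k>k_x$ such that $y_i(t)$ is monotonic for all $t>k$, and both $x_i(t)$ and $y_i(t)$ converge as $t\to\infty$.
   Context: Let $n\ge 1$ and $p_s,p_d\in(0,1)$ with $p_s>p_d$ and $np_s,np_d$ positive integers. An $(n,n,p_s,p_d)$-two-island network is an undirected graph (no self-loops) with vertex set $V=V_1\cup V_2$, $V_1\cap V_2=\emptyset$, $|V_1|=|V_2|=n$, such that each node of $V_1$ has exactly $np_s$ neighbours in $V_1$ and $np_d$ neighbours in $V_2$, and each node of $V_2$ has exactly $np_s$ neighbours in $V_2$ and $np_d$ neighbours in $V_1$. Let $w_{ij}\in\{0,1\}$ be the adjacency matrix, $N_i$ the set of neighbours of $i$, and $d_i=\sum_{j\in N_i}w_{ij}$. Dual opinions dynamics: each $i\in V$ has $x_i(t),y_i(t)\in[0,1]$, $t=0,1,2,\dots$, updated by $$x_i(t+1)=\frac{x_i(t)^{b}s_i(t)}{x_i(t)^{b}s_i(t)+(1-x_i(t))^{b}(d_i-s_i(t))},\qquad y_i(t+1)=\phi\, x_i(t+1)+(1-\phi)\hat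 y_{i,avg}(t),$$ with $s_i(t)=\sum_{j\in N_i}w_{ij}y_j(t)$ and $\hat y_{i,avg}(t)=\sum_{j\in N_i}\frac{w_{ij}}{d_i}y_j(t)$. *)

theory Defs
  imports "HOL-Analysis.Analysis"
begin

text \<open>Undirected simple graph given by a symmetric irreflexive adjacency relation E
  (w_ij = 1 iff E i j) on the finite vertex set V1 \<union> V2.\<close>

definition nbrs :: "('a \<Rightarrow> 'a \<Rightarrow> bool) \<Rightarrow> 'a set \<Rightarrow> 'a \<Rightarrow> 'a set" where
  "nbrs E V i = {j \<in> V. E i j}"

definition two_island_network ::
  "nat \<Rightarrow> real \<Rightarrow> real \<Rightarrow> 'a set \<Rightarrow> 'a set \<Rightarrow> ('a \<Rightarrow> 'a \<Rightarrow> bool) \<Rightarrow> bool" where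
  "two_island_network n ps pd V1 V2 E \<longleftrightarrow>
     n \<ge> 1 \<and> 0 < pd \<and> pd < ps \<and> ps < 1 \<and>
     (\<exists>k::nat. k > 0 \<and> real k = real n * ps) \<and>
     (\<exists>k::nat. k > 0 \<and> real k = real n * pd) \<and>
     finite V1 \<and> finite V2 \<and> V1 \<inter> V2 = {} \<and> card V1 = n \<and> card V2 = n \<and>
     (\<forall>i j. E i j \<longrightarrow> i \<in> V1 \<union> V2 \<and> j \<in> V1 \<union> V2) \<and>
     (\<forall>i j. E i j \<longleftrightarrow> E j i) \<and> (\<forall>i. \<not> E i i) \<and>
     (\<forall>i\<in>V1. real (card {j \<in> V1. E i j}) = real n * ps \<and>
               real (card {j \<in> V2. E i j}) = real n * pd) \<and>
     (\<forall>i\<in>V2. real (card {j \<in> V2. E i j}) = real n * ps \<and>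
               real (card {j \<in> V1. E i j}) = real n * pd)"

definition dual_opinion_dynamics ::
  "'a set \<Rightarrow> ('a \<Rightarrow> 'a \<Rightarrow> bool) \<Rightarrow> real \<Rightarrow> real \<Rightarrow>
   (nat \<Rightarrow> 'a \<Rightarrow> real) \<Rightarrow> (nat \<Rightarrow> 'a \<Rightarrow> real) \<Rightarrow> bool" where
  "dual_opinion_dynamics V E b phi x y \<longleftrightarrow>
     (\<forall>t. \<forall>i\<in>V.
        (let d = real (card (nbrs E V i));
             s = (\<Sum>j\<in>nbrs E V i. y t j)
         in x (Suc t) i = (x t i powr b * s) /
                            (x t i powr b * s + (1 - x t i) powr b * (d - s))
          \<and> y (Suc t) i = phi * x (Suc t) i + (1 - phi) * (s / d)))"

definition monotone_after :: "nat \<Rightarrow> (nat \<Rightarrow> real) \<Rightarrow> bool" where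
  "monotone_after k f \<longleftrightarrow>
     (\<forall>s t. k < s \<and> s \<le> t \<longrightarrow> f s \<le> f t) \<or> (\<forall>s t. k < s \<and> s \<le> t \<longrightarrow> f t \<le> f s)"

end

theory Submission
  imports Defs
begin

lemma mono_from:
  fixes f :: "nat \<Rightarrow> real"
  assumes "\<And>t. t \<ge> t0 \<Longrightarrow> f t \<le> f (Suc t)" "t0 \<le> s" "s \<le> t"
  shows "f s \<le> f t"
  using assms(3)
proof (induction t rule: dec_induct)
  case base then show ?case by simp
next
  case (step m) then show ?case using assms(1)[of m] assms(2) by linarith
qed

lemma anti_from:
  fixes f :: "nat \<Rightarrow> real"
  assumes "\<And>t. t \<ge> t0 \<Longrightarrow> f (Suc t) \<le> f t" "t0 \<le> s" "s \<le> t"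
  shows "f t \<le> f s"
  using assms(3)
proof (induction t rule: dec_induct)
  case base then show ?case by simp
next
  case (step m) then show ?case using assms(1)[of m] assms(2) by linarith
qed

lemma conv_bounded:
  fixes f :: "nat \<Rightarrow> real"
  assumes "monotone_after k f" "\<And>t. 0 \<le> f t" "\<And>t. f t \<le> 1"
  shows "convergent f"
proof -
  let ?g = "\<lambda>m. f (m + Suc k)"
  have "monoseq ?g" using assms(1) unfolding monotone_after_def monoseq_def by auto
  moreover have "Bseq ?g" using assms(2,3) by (intro BseqI'[of _ 1]) auto
  ultimately have "convergent ?g" using Bseq_monoseq_convergent by blast
  then obtain L where "?g \<longlonglongrightarrow> L" by (auto simp: convergent_def)
  then have "f \<longlonglongrightarrow> L" using LIMSEQ_offset by blast
  then show ?thesis by (auto simp: convergent_def)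
qed

lemma nb_sum:
  fixes g :: "'a \<Rightarrow> real"
  assumes "finite V1" "finite V2" "V1 \<inter> V2 = {}"
    "\<forall>k\<in>V1. g k = c1" "\<forall>k\<in>V2. g k = c2"
  shows "(\<Sum>k\<in>nbrs E (V1\<union>V2) j. g k) = real (card {k\<in>V1. E j k}) * c1 + real (card {k\<in>V2. E j k}) * c2"
    and "real (card (nbrs E (V1\<union>V2) j)) = real (card {k\<in>V1. E j k}) + real (card {k\<in>V2. E j k})"
proof -
  have eq: "nbrs E (V1\<union>V2) j = {k\<in>V1. E j k} \<union> {k\<in>V2. E j k}" by (auto simp: nbrs_def)
  have f1: "finite {k\<in>V1. E j k}" "finite {k\<in>V2. E j k}" using assms(1,2) by auto
  have dj: "{k\<in>V1. E j k} \<inter> {k\<in>V2. E j k} = {}" using assms(3) by auto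
  have "(\<Sum>k\<in>nbrs E (V1\<union>V2) j. g k) = (\<Sum>k\<in>{k\<in>V1. E j k}. g k) + (\<Sum>k\<in>{k\<in>V2. E j k}. g k)"
    unfolding eq using f1 dj by (rule sum.union_disjoint)
  also have "\<dots> = (\<Sum>k\<in>{k\<in>V1. E j k}. c1) + (\<Sum>k\<in>{k\<in>V2. E j k}. c2)"
    using assms(4,5) by (intro arg_cong2[where f="(+)"] sum.cong) auto
  finally show "(\<Sum>k\<in>nbrs E (V1\<union>V2) j. g k) = real (card {k\<in>V1. E j k}) * c1 + real (card {k\<in>V2. E j k}) * c2"
    by simp
  show "real (card (nbrs E (V1\<union>V2) j)) = real (card {k\<in>V1. E j k}) + real (card {k\<in>V2. E j k})"
    unfolding eq using card_Un_disjoint[OF f1 dj] by simp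
qed

lemma step_alg:
  fixes X s d b :: real
  assumes "0<X" "X<1" "0<s" "s<d"
  shows "0 < X powr b * s / (X powr b * s + (1-X) powr b * (d-s))"
    "X powr b * s / (X powr b * s + (1-X) powr b * (d-s)) < 1"
    "(1-X) powr b * (d-s) / ((1-X) powr b * (d-s) + X powr b * s) =
       1 - X powr b * s / (X powr b * s + (1-X) powr b * (d-s))"
proof -
  have p: "X powr b > 0" "(1-X) powr b > 0" using assms by auto
  have ps: "X powr b * s > 0" "(1-X) powr b * (d-s) > 0" using p assms by auto
  show "0 < X powr b * s / (X powr b * s + (1-X) powr b * (d-s))" using ps by simp
  show "X powr b * s / (X powr b * s + (1-X) powr b * (d-s)) < 1" using ps by simp
  show "(1-X) powr b * (d-s) / ((1-X) powr b * (d-s) + X powr b * s) =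
       1 - X powr b * s / (X powr b * s + (1-X) powr b * (d-s))" using ps
    by (simp add: field_simps)
qed

theorem lemmaB4:
  fixes n :: nat and ps pd b phi x0 y0 :: real
    and V1 V2 :: "'a set" and E :: "'a \<Rightarrow> 'a \<Rightarrow> bool"
    and x y :: "nat \<Rightarrow> 'a \<Rightarrow> real" and i :: 'a and kx :: nat
  assumes G: "two_island_network n ps pd V1 V2 E"
    and b: "b > 0" and phi: "0 < phi" "phi < 1"
    and x0: "1/2 < x0" "x0 < 1" and y0: "1/2 \<le> y0" "y0 \<le> x0"
    and init1: "\<forall>j\<in>V1. x 0 j = x0 \<and> y 0 j = y0"
    and init2: "\<forall>j\<in>V2. x 0 j = 1 - x0 \<and> y 0 j = 1 - y0"
    and dyn: "dual_opinion_dynamics (V1 \<union> V2) E b phi x y"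
    and i: "i \<in> V1"
    and mx: "monotone_after kx (\<lambda>t. x t i)"
  shows "\<exists>k>kx. monotone_after k (\<lambda>t. y t i) \<and>
           convergent (\<lambda>t. x t i) \<and> convergent (\<lambda>t. y t i)"
proof -
  define A where "A = real n * ps"
  define B where "B = real n * pd"
  have n1: "n \<ge> 1" and pd: "0 < pd" "pd < ps" and fin: "finite V1" "finite V2"
    and dis: "V1 \<inter> V2 = {}"
    and deg1: "\<forall>j\<in>V1. real (card {k \<in> V1. E j k}) = A \<and> real (card {k \<in> V2. E j k}) = B"
    and deg2: "\<forall>j\<in>V2. real (card {k \<in> V2. E j k}) = A \<and> real (card {k \<in> V1. E j k}) = B"
    using G unfolding two_island_network_def A_def B_def by auto
  have B0: "0 < B" using n1 pd unfolding B_def by simp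
  have AB: "B < A" using n1 pd unfolding A_def B_def by simp
  define d where "d = A + B"
  have d0: "d > 0" using AB B0 unfolding d_def by simp
  define S where "S Y = A * Y + B * (1 - Y)" for Y :: real
  have S_bd: "0 < S Y" "S Y < d" if "0 < Y" "Y < 1" for Y
  proof -
    have "(A - B) * Y \<ge> 0" "(A - B) * Y < A - B" using that AB by auto
    then show "0 < S Y" "S Y < d" unfolding S_def d_def using B0 AB by (auto simp: algebra_simps)
  qed
  define F where "F X Y = X powr b * S Y / (X powr b * S Y + (1-X) powr b * (d - S Y))" for X Y :: real
  have dynj: "\<And>t j. j \<in> V1 \<union> V2 \<Longrightarrow>
      x (Suc t) j = (x t j powr b * (\<Sum>k\<in>nbrs E (V1 \<union> V2) j. y t k)) /
          (x t j powr b * (\<Sum>k\<in>nbrs E (V1 \<union> V2) j. y t k) + (1 - x t j) powr b *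
            (real (card (nbrs E (V1 \<union> V2) j)) - (\<Sum>k\<in>nbrs E (V1 \<union> V2) j. y t k)))
      \<and> y (Suc t) j = phi * x (Suc t) j + (1 - phi) *
          ((\<Sum>k\<in>nbrs E (V1 \<union> V2) j. y t k) / real (card (nbrs E (V1 \<union> V2) j)))"
    using dyn unfolding dual_opinion_dynamics_def Let_def by blast
  define P where "P t \<longleftrightarrow> (\<forall>j\<in>V1. x t j = x t i \<and> y t j = y t i) \<and>
      (\<forall>j\<in>V2. x t j = 1 - x t i \<and> y t j = 1 - y t i) \<and>
      0 < x t i \<and> x t i < 1 \<and> 0 < y t i \<and> y t i < 1" for t
  have stepP: "P (Suc t) \<and> y (Suc t) i = phi * x (Suc t) i + (1 - phi) * (S (y t i) / d)"
    if Pt: "P t" for t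
  proof -
    define X where "X = x t i"
    define Y where "Y = y t i"
    have XY: "0 < X" "X < 1" "0 < Y" "Y < 1" using Pt unfolding P_def X_def Y_def by auto
    have yv1: "\<forall>k\<in>V1. y t k = Y" and yv2: "\<forall>k\<in>V2. y t k = 1 - Y"
      using Pt unfolding P_def Y_def by auto
    have sb: "0 < S Y" "S Y < d" using S_bd XY by auto
    have F1: "x (Suc t) j = F X Y \<and> y (Suc t) j = phi * F X Y + (1 - phi) * (S Y / d)"
      if j: "j \<in> V1" for j
    proof -
      have xj: "x t j = X" using Pt j unfolding P_def X_def by auto
      have sj: "(\<Sum>k\<in>nbrs E (V1 \<union> V2) j. y t k) = S Y"
        using nb_sum(1)[OF fin dis yv1 yv2, of E j] deg1 j unfolding S_def by auto
      have cj: "real (card (nbrs E (V1 \<union> V2) j)) = d"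
        using nb_sum(2)[OF fin dis yv1 yv2, of E j] deg1 j unfolding d_def by auto
      show ?thesis using dynj[of j t] j xj sj cj unfolding F_def by simp
    qed
    have F2: "x (Suc t) j = 1 - F X Y \<and> y (Suc t) j = 1 - (phi * F X Y + (1 - phi) * (S Y / d))"
      if j: "j \<in> V2" for j
    proof -
      have xj: "x t j = 1 - X" using Pt j unfolding P_def X_def by auto
      have sj: "(\<Sum>k\<in>nbrs E (V1 \<union> V2) j. y t k) = d - S Y"
        using nb_sum(1)[OF fin dis yv1 yv2, of E j] deg2 j unfolding S_def d_def
        by (auto simp: algebra_simps)
      have cj: "real (card (nbrs E (V1 \<union> V2) j)) = d"
        using nb_sum(2)[OF fin dis yv1 yv2, of E j] deg2 j unfolding d_def by auto
      have xs: "x (Suc t) j = (1-X) powr b * (d - S Y) / ((1-X) powr b * (d - S Y) + X powr b * S Y)"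
        using dynj[of j t] j xj sj cj by simp
      then have xs': "x (Suc t) j = 1 - F X Y"
        using step_alg(3)[OF XY(1,2) sb, of b] unfolding F_def by simp
      have "y (Suc t) j = phi * (1 - F X Y) + (1 - phi) * ((d - S Y) / d)"
        using dynj[of j t] j xs' sj cj by simp
      also have "\<dots> = 1 - (phi * F X Y + (1 - phi) * (S Y / d))"
        using d0 by (simp add: field_simps)
      finally show ?thesis using xs' by simp
    qed
    have Fb: "0 < F X Y" "F X Y < 1" using step_alg(1,2)[OF XY(1,2) sb, of b] unfolding F_def by auto
    have sd: "0 < S Y / d" "S Y / d < 1" using sb d0 by auto
    have yb: "0 < phi * F X Y + (1 - phi) * (S Y / d)" "phi * F X Y + (1 - phi) * (S Y / d) < 1"
    proof -
      have "phi * F X Y > 0" "(1 - phi) * (S Y / d) > 0" using Fb sd phi by (auto intro!: mult_pos_pos simp del: times_divide_eq_right)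
      then show "0 < phi * F X Y + (1 - phi) * (S Y / d)" by linarith
      have "phi * F X Y < phi" "(1 - phi) * (S Y / d) < 1 - phi" using Fb sd phi by (auto simp del: times_divide_eq_right)
      then show "phi * F X Y + (1 - phi) * (S Y / d) < 1" by linarith
    qed
    show ?thesis unfolding P_def using F1 F2 i Fb yb by (auto simp: Y_def)
  qed
  have P0: "P 0" unfolding P_def using init1 init2 i x0 y0 by auto
  have Pall: "P t" for t
    by (induction t) (use P0 stepP in auto)
  have yrec: "y (Suc t) i = phi * x (Suc t) i + (1 - phi) * (S (y t i) / d)" for t
    using stepP Pall by blast
  have Smono: "S u / d \<le> S v / d" if "u \<le> v" for u v
  proof -
    have "S v - S u = (A - B) * (v - u)" unfolding S_def by (simp add: algebra_simps)
    also have "\<dots> \<ge> 0" using AB that by auto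
    finally show ?thesis using d0 by (simp add: divide_right_mono)
  qed
  have bnds: "0 \<le> x t i" "x t i \<le> 1" "0 \<le> y t i" "y t i \<le> 1" for t
    using Pall[of t] unfolding P_def by auto
  have delta: "y (Suc (Suc t)) i - y (Suc t) i =
      phi * (x (Suc (Suc t)) i - x (Suc t) i) + (1 - phi) * (S (y (Suc t) i) / d - S (y t i) / d)" for t
    using yrec[of "Suc t"] yrec[of t] by (simp add: algebra_simps)
  have up: "y (Suc t) i \<le> y (Suc (Suc t)) i"
    if "x (Suc t) i \<le> x (Suc (Suc t)) i" "y t i \<le> y (Suc t) i" for t
  proof -
    have "0 \<le> phi * (x (Suc (Suc t)) i - x (Suc t) i)" using that phi by auto
    moreover have "0 \<le> (1 - phi) * (S (y (Suc t) i) / d - S (y t i) / d)"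
      using Smono[OF that(2)] phi by auto
    ultimately show ?thesis using delta[of t] by linarith
  qed
  have down: "y (Suc (Suc t)) i \<le> y (Suc t) i"
    if "x (Suc (Suc t)) i \<le> x (Suc t) i" "y (Suc t) i \<le> y t i" for t
  proof -
    have "phi * (x (Suc (Suc t)) i - x (Suc t) i) \<le> 0" using that phi
      by (simp add: mult_nonneg_nonpos)
    moreover have "(1 - phi) * (S (y (Suc t) i) / d - S (y t i) / d) \<le> 0"
      using Smono[OF that(2)] phi by (simp add: mult_nonneg_nonpos)
    ultimately show ?thesis using delta[of t] by linarith
  qed
  have my: "\<exists>k>kx. monotone_after k (\<lambda>t. y t i)"
  proof (cases "\<forall>s t. kx < s \<and> s \<le> t \<longrightarrow> x s i \<le> x t i")
    case True
    have xs: "x (Suc t) i \<le> x (Suc (Suc t)) i" if "t \<ge> kx" for t using True that by auto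
    show ?thesis
    proof (cases "\<exists>t0\<ge>kx. y t0 i \<le> y (Suc t0) i")
      case True
      then obtain t0 where t0: "t0 \<ge> kx" "y t0 i \<le> y (Suc t0) i" by blast
      have st: "y t i \<le> y (Suc t) i" if "t \<ge> t0" for t
        using that
      proof (induction t rule: dec_induct)
        case base then show ?case using t0 by simp
      next
        case (step m) then show ?case using up[of m] xs[of m] t0 by simp
      qed
      have "monotone_after (Suc t0) (\<lambda>t. y t i)" unfolding monotone_after_def
        using mono_from[of t0 "\<lambda>t. y t i", OF st] by auto
      then show ?thesis using t0 by (intro exI[of _ "Suc t0"]) auto
    next
      case False
      then have st: "y (Suc t) i \<le> y t i" if "t \<ge> kx" for t using that by force
      have "monotone_after (Suc kx) (\<lambda>t. y t i)" unfolding monotone_after_def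
        using anti_from[of kx "\<lambda>t. y t i", OF st] by auto
      then show ?thesis by (intro exI[of _ "Suc kx"]) auto
    qed
  next
    case False
    then have False': "\<forall>s t. kx < s \<and> s \<le> t \<longrightarrow> x t i \<le> x s i" using mx unfolding monotone_after_def by blast
    have xs: "x (Suc (Suc t)) i \<le> x (Suc t) i" if "t \<ge> kx" for t using False' that by auto
    show ?thesis
    proof (cases "\<exists>t0\<ge>kx. y (Suc t0) i \<le> y t0 i")
      case True
      then obtain t0 where t0: "t0 \<ge> kx" "y (Suc t0) i \<le> y t0 i" by blast
      have st: "y (Suc t) i \<le> y t i" if "t \<ge> t0" for t
        using that
      proof (induction t rule: dec_induct)
        case base then show ?case using t0 by simp
      next
        case (step m) then show ?case using down[of m] xs[of m] t0 by simp
      qed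
      have "monotone_after (Suc t0) (\<lambda>t. y t i)" unfolding monotone_after_def
        using anti_from[of t0 "\<lambda>t. y t i", OF st] by auto
      then show ?thesis using t0 by (intro exI[of _ "Suc t0"]) auto
    next
      case False
      then have st: "y t i \<le> y (Suc t) i" if "t \<ge> kx" for t using that by force
      have "monotone_after (Suc kx) (\<lambda>t. y t i)" unfolding monotone_after_def
        using mono_from[of kx "\<lambda>t. y t i", OF st] by auto
      then show ?thesis by (intro exI[of _ "Suc kx"]) auto
    qed
  qed
  then obtain k where k: "k > kx" "monotone_after k (\<lambda>t. y t i)" by blast
  have "convergent (\<lambda>t. x t i)" using conv_bounded[OF mx] bnds by auto
  moreover have "convergent (\<lambda>t. y t i)" using conv_bounded[OF k(2)] bnds by auto
  ultimately show ?thesis using k by blast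
qed

end
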